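(* For every finite connected chordal graph $G$, the set $D(G)=\{v: e(v)=\operatorname{diam}(G)\}$ of diametral vertices is a radius certificate of $G$: for every vertex $u$ there is $t\in D(G)$ with $d(u,t)\ge\operatorname{rad}(G)$.
   Context: A graph is chordal if every induced cycle of length at least 4 has a chord. $d$ shortest-path distance, $e(v)=\max_u d(v,u)$, $\operatorname{rad}(G)=\min_v e(v)$, $\operatorname{diam}(G)=\max_v e(v)$. *)

theory Defs
  imports Main
begin

definition simple_graph :: "'a set \<Rightarrow> ('a \<Rightarrow> 'a \<Rightarrow> bool) \<Rightarrow> bool" where
  "simple_graph V E \<longleftrightarrow> finite V \<and>
     (\<forall>x y. E x y \<longrightarrow> x \<in> V \<and> y \<in> V) \<and>
     (\<forall>x y. E x y \<longrightarrow> E y x) \<and> (\<forall>x. \<not> E x x)"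

text \<open>A walk is a nonempty list of vertices with consecutive entries adjacent;
  its length is the number of edges, i.e. length minus one.\<close>

definition walk :: "'a set \<Rightarrow> ('a \<Rightarrow> 'a \<Rightarrow> bool) \<Rightarrow> 'a list \<Rightarrow> bool" where
  "walk V E p \<longleftrightarrow> p \<noteq> [] \<and> set p \<subseteq> V \<and>
     (\<forall>i. Suc i < length p \<longrightarrow> E (p ! i) (p ! Suc i))"

definition connected_graph :: "'a set \<Rightarrow> ('a \<Rightarrow> 'a \<Rightarrow> bool) \<Rightarrow> bool" where
  "connected_graph V E \<longleftrightarrow> V \<noteq> {} \<and>
     (\<forall>u\<in>V. \<forall>v\<in>V. \<exists>p. walk V E p \<and> hd p = u \<and> last p = v)"

text \<open>Shortest-path distance (meaningful for connected graphs).\<close>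

definition dist :: "'a set \<Rightarrow> ('a \<Rightarrow> 'a \<Rightarrow> bool) \<Rightarrow> 'a \<Rightarrow> 'a \<Rightarrow> nat" where
  "dist V E u v = (LEAST n. \<exists>p. walk V E p \<and> hd p = u \<and> last p = v \<and> length p = Suc n)"

definition ecc :: "'a set \<Rightarrow> ('a \<Rightarrow> 'a \<Rightarrow> bool) \<Rightarrow> 'a \<Rightarrow> nat" where
  "ecc V E v = Max ((\<lambda>u. dist V E v u) ` V)"

definition radius :: "'a set \<Rightarrow> ('a \<Rightarrow> 'a \<Rightarrow> bool) \<Rightarrow> nat" where
  "radius V E = Min (ecc V E ` V)"

definition diameter :: "'a set \<Rightarrow> ('a \<Rightarrow> 'a \<Rightarrow> bool) \<Rightarrow> nat" where
  "diameter V E = Max (ecc V E ` V)"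

definition diametral :: "'a set \<Rightarrow> ('a \<Rightarrow> 'a \<Rightarrow> bool) \<Rightarrow> 'a set" where
  "diametral V E = {v \<in> V. ecc V E v = diameter V E}"

definition induced_cycle :: "'a set \<Rightarrow> ('a \<Rightarrow> 'a \<Rightarrow> bool) \<Rightarrow> 'a list \<Rightarrow> bool" where
  "induced_cycle V E c \<longleftrightarrow> length c \<ge> 3 \<and> distinct c \<and> set c \<subseteq> V \<and>
     (\<forall>i<length c. \<forall>j<length c.
        E (c ! i) (c ! j) \<longleftrightarrow> (j = Suc i mod length c \<or> i = Suc j mod length c))"

definition chordal :: "'a set \<Rightarrow> ('a \<Rightarrow> 'a \<Rightarrow> bool) \<Rightarrow> bool" where
  "chordal V E \<longleftrightarrow> (\<forall>c. induced_cycle V E c \<longrightarrow> length c < 4)"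

end

theory Submission
  imports Defs
begin


lemma walk_Nil[simp]: "\<not> walk S E []" by (simp add: walk_def)

lemma walk_single[simp]: "walk S E [x] \<longleftrightarrow> x \<in> S" by (simp add: walk_def)

lemma walk_Cons2: "walk S E (x # y # p) \<longleftrightarrow> x \<in> S \<and> E x y \<and> walk S E (y # p)"
  unfolding walk_def
  by (auto simp: nth_Cons split: nat.splits)

lemma walk_Cons: "walk S E (x # p) \<longleftrightarrow> x \<in> S \<and> (p = [] \<or> (E x (hd p) \<and> walk S E p))"
  by (cases p) (auto simp: walk_Cons2)

lemma walk_append:
  assumes "walk S E xs" "walk S E ys" "E (last xs) (hd ys)"
  shows "walk S E (xs @ ys)"
  using assms
proof (induction xs)
  case Nil then show ?case by simp
next
  case (Cons x xs)
  show ?case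
  proof (cases "xs = []")
    case True
    then show ?thesis using Cons.prems by (cases ys) (auto simp: walk_Cons2)
  next
    case False
    then have "walk S E xs" "x \<in> S" "E x (hd xs)" using Cons.prems(1) by (auto simp: walk_Cons)
    then have "walk S E (xs @ ys)" using Cons False by simp
    then show ?thesis using \<open>x \<in> S\<close> \<open>E x (hd xs)\<close> False by (auto simp: walk_Cons)
  qed
qed

lemma walk_append2:
  assumes "walk S E xs" "walk S E ys" "last xs = hd ys"
  shows "walk S E (xs @ tl ys)"
proof (cases "tl ys = []")
  case True then show ?thesis using assms by simp
next
  case False
  then obtain y z zs where ys: "ys = y # z # zs" using assms(2) by (cases ys; cases "tl ys") auto
  have "walk S E (tl ys)" "E (last xs) (hd (tl ys))" using assms ys by (auto simp: walk_Cons2)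
  then show ?thesis using walk_append assms by blast
qed

lemma walk_nth_set: "walk S E p \<Longrightarrow> i < length p \<Longrightarrow> p ! i \<in> S"
  by (auto simp: walk_def)

lemma walk_edge: "walk S E p \<Longrightarrow> Suc i < length p \<Longrightarrow> E (p ! i) (p ! Suc i)"
  by (auto simp: walk_def)

lemma walk_take: "walk S E p \<Longrightarrow> 0 < k \<Longrightarrow> walk S E (take k p)"
  unfolding walk_def by (auto dest: in_set_takeD)

lemma walk_drop: "walk S E p \<Longrightarrow> k < length p \<Longrightarrow> walk S E (drop k p)"
  unfolding walk_def by (auto dest: in_set_dropD)

lemma walk_mono: "S \<subseteq> T \<Longrightarrow> walk S E p \<Longrightarrow> walk T E p"
  unfolding walk_def by auto

lemma walk_rev:
  assumes "\<forall>x y. E x y \<longrightarrow> E y x" "walk S E p"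
  shows "walk S E (rev p)"
  unfolding walk_def
proof (intro conjI allI impI)
  show "rev p \<noteq> []" "set (rev p) \<subseteq> S" using assms(2) by (auto simp: walk_def)
  fix i assume i: "Suc i < length (rev p)"
  have "E (p ! (length p - Suc (Suc i))) (p ! Suc (length p - Suc (Suc i)))"
    using i walk_edge[OF assms(2), of "length p - Suc (Suc i)"] by simp
  moreover have "Suc (length p - Suc (Suc i)) = length p - Suc i" using i by simp
  ultimately show "E (rev p ! i) (rev p ! Suc i)" using i assms(1) by (auto simp: rev_nth)
qed

lemma walk_exit:
  assumes "walk S E p" "hd p \<in> X" "last p \<notin> X"
  shows "\<exists>i. Suc i < length p \<and> p ! i \<in> X \<and> p ! Suc i \<notin> X"
proof -
  have ne: "p \<noteq> []" using assms by (auto simp: walk_def)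
  let ?P = "\<lambda>i. i < length p \<and> p ! i \<notin> X"
  have ex: "?P (length p - 1)" using ne assms(3) by (simp add: last_conv_nth)
  define j where "j = (LEAST i. ?P i)"
  have j: "?P j" unfolding j_def using ex by (rule LeastI)
  have jmin: "\<And>i. i < j \<Longrightarrow> \<not> ?P i" unfolding j_def by (rule not_less_Least)
  have "j \<noteq> 0" using j assms(2) ne by (auto simp: hd_conv_nth) (metis gr0I)
  then obtain i where ij: "j = Suc i" by (cases j) auto
  have "\<not> ?P i" using jmin ij by auto
  then show ?thesis using j ij by auto
qed


locale sgraph =
  fixes V :: "'a set" and E :: "'a \<Rightarrow> 'a \<Rightarrow> bool"
  assumes sg: "simple_graph V E" and cg: "connected_graph V E"
begin

abbreviation d where "d \<equiv> dist V E"

lemma finV: "finite V" using sg by (simp add: simple_graph_def)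
lemma E_V: "E x y \<Longrightarrow> x \<in> V \<and> y \<in> V" using sg by (simp add: simple_graph_def)
lemma E_sym: "E x y \<Longrightarrow> E y x" using sg by (simp add: simple_graph_def)
lemma E_sym': "\<forall>x y. E x y \<longrightarrow> E y x" using E_sym by blast
lemma E_irr: "\<not> E x x" using sg by (simp add: simple_graph_def)
lemma V_ne: "V \<noteq> {}" using cg by (simp add: connected_graph_def)

lemma dist_le_walk:
  assumes "walk V E p" "hd p = x" "last p = y"
  shows "d x y \<le> length p - 1"
proof -
  have "length p = Suc (length p - 1)" using assms(1) by (cases p) (auto simp: walk_def)
  then show ?thesis unfolding dist_def using assms by (intro Least_le) blast
qed

lemma dist_walk:
  assumes "x \<in> V" "y \<in> V"
  shows "\<exists>p. walk V E p \<and> hd p = x \<and> last p = y \<and> length p = Suc (d x y)"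
proof -
  obtain p where p: "walk V E p" "hd p = x" "last p = y"
    using cg assms by (auto simp: connected_graph_def)
  have "length p = Suc (length p - 1)" using p(1) by (cases p) (auto simp: walk_def)
  then have "\<exists>n p. walk V E p \<and> hd p = x \<and> last p = y \<and> length p = Suc n" using p by blast
  then show ?thesis unfolding dist_def by (rule LeastI_ex)
qed

lemma dist_self: "x \<in> V \<Longrightarrow> d x x = 0"
  using dist_le_walk[of "[x]" x x] by simp

lemma dist_sym:
  assumes "x \<in> V" "y \<in> V" shows "d x y = d y x"
proof -
  have *: "d a b \<le> d b a" if ab: "a \<in> V" "b \<in> V" for a b
  proof -
    obtain p where p: "walk V E p" "hd p = b" "last p = a" "length p = Suc (d b a)"
      using dist_walk[of b a] ab by blast
    have "walk V E (rev p)" using walk_rev[OF E_sym' p(1)] .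
    moreover have "hd (rev p) = a" "last (rev p) = b" using p by (auto simp: hd_rev last_rev)
    ultimately have "d a b \<le> length (rev p) - 1" by (rule dist_le_walk)
    then show ?thesis using p by simp
  qed
  show ?thesis using *[OF assms] *[OF assms(2,1)] by simp
qed

lemma dist_triangle:
  assumes "x \<in> V" "y \<in> V" "z \<in> V" shows "d x z \<le> d x y + d y z"
proof -
  obtain p where p: "walk V E p" "hd p = x" "last p = y" "length p = Suc (d x y)"
    using dist_walk assms by blast
  obtain q where q: "walk V E q" "hd q = y" "last q = z" "length q = Suc (d y z)"
    using dist_walk assms by blast
  have w: "walk V E (p @ tl q)" by (rule walk_append2[OF p(1) q(1)]) (simp add: p q)
  have "hd (p @ tl q) = x" using p by (cases p) auto
  moreover have "last (p @ tl q) = z"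
    using p q by (cases q) (auto)
  ultimately have "d x z \<le> length (p @ tl q) - 1" using dist_le_walk[OF w] by blast
  then show ?thesis using p q by simp
qed

lemma dist_edge: "E x y \<Longrightarrow> d x y \<le> 1"
  using dist_le_walk[of "[x,y]" x y] E_V by (auto simp: walk_Cons2)

lemma dist_0: assumes "x \<in> V" "y \<in> V" "d x y = 0" shows "x = y"
proof -
  obtain p where p: "walk V E p" "hd p = x" "last p = y" "length p = Suc (d x y)"
    using dist_walk assms by blast
  then show ?thesis using assms by (cases p) auto
qed

lemma dist_1: assumes "x \<in> V" "y \<in> V" "d x y = 1" shows "E x y"
proof -
  obtain p where p: "walk V E p" "hd p = x" "last p = y" "length p = Suc (d x y)"
    using dist_walk assms by blast
  then obtain a b where "p = [a,b]" using assms by (cases p; cases "tl p") auto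
  then show ?thesis using p by (auto simp: walk_Cons2)
qed

lemma geodesic_nth:
  assumes p: "walk V E p" "hd p = x" "last p = y" "length p = Suc (d x y)" and i: "i < length p"
  shows "d x (p ! i) = i" "d (p ! i) y = d x y - i"
proof -
  have ne: "p \<noteq> []" using p by auto
  have xV: "x \<in> V" and yV: "y \<in> V" and qV: "p ! i \<in> V"
    using p(1,2,3) ne i by (auto simp: walk_def hd_conv_nth last_conv_nth)
  have "walk V E (take (Suc i) p)" using walk_take p(1) by auto
  moreover have "hd (take (Suc i) p) = x" using p ne by (cases p) auto
  moreover have "last (take (Suc i) p) = p ! i" using i by (simp add: take_Suc_conv_app_nth)
  ultimately have a: "d x (p ! i) \<le> i" using dist_le_walk[of "take (Suc i) p"] i by fastforce
  have "walk V E (drop i p)" using walk_drop p(1) i by auto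
  moreover have "hd (drop i p) = p ! i" using i by (simp add: hd_drop_conv_nth)
  moreover have "last (drop i p) = y" using i p(3) by simp
  ultimately have b: "d (p ! i) y \<le> length p - 1 - i" using dist_le_walk[of "drop i p"] by fastforce
  have c: "d x y \<le> d x (p ! i) + d (p ! i) y" using dist_triangle xV yV qV by blast
  show "d x (p ! i) = i" using a b c p(4) i by arith
  show "d (p ! i) y = d x y - i" using a b c p(4) i by arith
qed

lemma dist_edge_diff:
  assumes "u \<in> V" "E a b" shows "d u a \<le> d u b + 1"
  using dist_triangle[of u b a] assms E_V dist_edge[of b a] E_sym by fastforce

lemma ancestor:
  assumes "u \<in> V" "v \<in> V" "j \<le> d u v"
  shows "\<exists>a\<in>V. d u a = j \<and> d a v = d u v - j"
proof -
  obtain p where p: "walk V E p" "hd p = u" "last p = v" "length p = Suc (d u v)"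
    using dist_walk assms by blast
  have "j < length p" using p assms by simp
  then show ?thesis using geodesic_nth[OF p] walk_nth_set[OF p(1)] by blast
qed

lemma ecc_ge: "x \<in> V \<Longrightarrow> y \<in> V \<Longrightarrow> d x y \<le> ecc V E x"
  unfolding ecc_def using finV by (intro Max_ge) auto

lemma ecc_attained: "x \<in> V \<Longrightarrow> \<exists>y\<in>V. d x y = ecc V E x"
  unfolding ecc_def using finV V_ne by (metis (mono_tags, lifting) Max_in finite_imageI image_iff image_is_empty)

lemma ecc_le: "x \<in> V \<Longrightarrow> (\<And>y. y \<in> V \<Longrightarrow> d x y \<le> k) \<Longrightarrow> ecc V E x \<le> k"
  unfolding ecc_def using finV V_ne by (subst Max_le_iff) auto

lemma radius_le: "x \<in> V \<Longrightarrow> radius V E \<le> ecc V E x"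
  unfolding radius_def using finV by (intro Min_le) auto

lemma central: "\<exists>c\<in>V. ecc V E c = radius V E"
  unfolding radius_def using finV V_ne by (metis (mono_tags, lifting) Min_in finite_imageI image_iff image_is_empty)

lemma ecc_le_diam: "x \<in> V \<Longrightarrow> ecc V E x \<le> diameter V E"
  unfolding diameter_def using finV by (intro Max_ge) auto

lemma diametral_ex: "\<exists>c\<in>V. ecc V E c = diameter V E"
  unfolding diameter_def using finV V_ne by (metis (mono_tags, lifting) Max_in finite_imageI image_iff image_is_empty)

lemma dist_le_diam: "x \<in> V \<Longrightarrow> y \<in> V \<Longrightarrow> d x y \<le> diameter V E"
  using ecc_ge ecc_le_diam le_trans by blast

end



locale chgraph = sgraph +
  assumes ch: "chordal V E"
begin

lemma Suc_mod_eq: "i < L \<Longrightarrow> Suc i mod L = (if Suc i = L then 0 else Suc i)"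
  by auto

lemma apex_cycle:
  assumes aV: "a \<in> V" and w: "walk V E p" and dp: "distinct p" and ap: "a \<notin> set p"
    and len: "length p \<ge> 3"
    and ah: "E a (hd p)" and al: "E a (last p)"
    and anot: "\<forall>i. 0 < i \<and> i < length p - 1 \<longrightarrow> \<not> E a (p ! i)"
    and chl: "\<forall>i j. i + 1 < j \<and> j < length p \<longrightarrow> \<not> E (p ! i) (p ! j)"
  shows False
proof -
  define n where "n = length p"
  have ne: "p \<noteq> []" using len by auto
  have pE: "E (p ! i) (p ! j) \<longleftrightarrow> j = Suc i \<or> i = Suc j" if "i < n" "j < n" for i j
  proof
    assume e: "E (p ! i) (p ! j)"
    show "j = Suc i \<or> i = Suc j"
    proof (rule ccontr)
      assume c: "\<not> (j = Suc i \<or> i = Suc j)"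
      consider "i = j" | "i + 1 < j" | "j + 1 < i" using c by linarith
      then show False
      proof cases
        case 1 then show ?thesis using e E_irr by simp
      next
        case 2 then show ?thesis using chl e that n_def by blast
      next
        case 3 then show ?thesis using chl E_sym[OF e] that n_def by blast
      qed
    qed
  next
    assume "j = Suc i \<or> i = Suc j"
    then show "E (p ! i) (p ! j)"
      using walk_edge[OF w, of i] walk_edge[OF w, of j] that n_def E_sym by auto
  qed
  have aE: "E a (p ! j) \<longleftrightarrow> j = 0 \<or> j = n - 1" if "j < n" for j
    using that anot ah al ne n_def by (auto simp: hd_conv_nth last_conv_nth)
  define c where "c = a # p"
  have Lc: "length c = Suc n" using c_def n_def by simp
  have ic: "induced_cycle V E c"
    unfolding induced_cycle_def
  proof (intro conjI allI impI)
    show "3 \<le> length c" using Lc len n_def by simp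
    show "distinct c" using c_def dp ap by simp
    show "set c \<subseteq> V" using c_def aV w by (auto simp: walk_def)
    fix i j assume i: "i < length c" and j: "j < length c"
    have mi: "Suc i mod length c = (if Suc i = length c then 0 else Suc i)" using i by (rule Suc_mod_eq)
    have mj: "Suc j mod length c = (if Suc j = length c then 0 else Suc j)" using j by (rule Suc_mod_eq)
    have n3: "n \<ge> 3" using len n_def by simp
    show "E (c ! i) (c ! j) = (j = Suc i mod length c \<or> i = Suc j mod length c)"
    proof (cases i)
      case 0
      then show ?thesis
      proof (cases j)
        case 0 then show ?thesis using \<open>i = 0\<close> E_irr Lc n3 by (simp add: c_def)
      next
        case (Suc j')
        have "j' < n" using j Suc Lc by simp
        then have "E (c ! i) (c ! j) = (j' = 0 \<or> j' = n - 1)" using aE[of j'] \<open>i = 0\<close> Suc c_def by simp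
        moreover have "(j = Suc i mod length c \<or> i = Suc j mod length c) = (j' = 0 \<or> j' = n - 1)"
          using mi mj \<open>i = 0\<close> Suc Lc n3 by auto
        ultimately show ?thesis by simp
      qed
    next
      case (Suc i')
      have i': "i' < n" using i Suc Lc by simp
      show ?thesis
      proof (cases j)
        case 0
        have "E (c ! i) (c ! j) = E (p ! i') a" using 0 Suc c_def by simp
        also have "\<dots> = E a (p ! i')" using E_sym by blast
        also have "\<dots> = (i' = 0 \<or> i' = n - 1)" using aE[OF i'] .
        also have "\<dots> = (j = Suc i mod length c \<or> i = Suc j mod length c)"
          using mi mj 0 Suc Lc n3 i' by auto
        finally show ?thesis .
      next
        case (Suc j')
        have j': "j' < n" using j Suc Lc by simp
        have "E (c ! i) (c ! j) = E (p ! i') (p ! j')" using \<open>i = Suc i'\<close> Suc c_def by simp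
        also have "\<dots> = (j' = Suc i' \<or> i' = Suc j')" using pE[OF i' j'] .
        also have "\<dots> = (j = Suc i mod length c \<or> i = Suc j mod length c)"
          using mi mj \<open>i = Suc i'\<close> Suc Lc n3 i' j' by auto
        finally show ?thesis .
      qed
    qed
  qed
  have "length c < 4" using ch ic by (simp add: chordal_def)
  then show False using Lc len n_def by simp
qed

lemma nbr_connected:
  assumes aV: "a \<in> V" and UV: "U \<subseteq> V" and aU: "a \<notin> U" and xU: "x \<in> U" and yU: "y \<in> U"
    and ax: "E a x" and ay: "E a y" and p: "walk U E p" "hd p = x" "last p = y"
  shows "\<exists>q. walk (U \<inter> {v. E a v}) E q \<and> hd q = x \<and> last q = y"
proof (rule ccontr)
  assume nc: "\<not> ?thesis"
  define N where "N = U \<inter> {v. E a v}"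
  define C where "C = {v. \<exists>q. walk N E q \<and> hd q = x \<and> last q = v}"
  have xC: "x \<in> C" unfolding C_def using xU ax N_def by (intro CollectI exI[of _ "[x]"]) auto
  have yC: "y \<notin> C" using nc C_def N_def by auto
  have CN: "C \<subseteq> N" unfolding C_def
    by (auto simp: walk_def last_conv_nth)
  have Cclosed: "w \<in> C" if vw: "v \<in> C" "w \<in> N" "E v w" for v w
  proof -
    obtain q where q: "walk N E q" "hd q = x" "last q = v" using vw(1) C_def by auto
    have "walk N E (q @ [w])" using walk_append[OF q(1), of "[w]"] q vw by simp
    moreover have "hd (q @ [w]) = x" using q by (cases q) auto
    ultimately show ?thesis unfolding C_def by auto
  qed
  define good where "good q \<longleftrightarrow> walk U E q \<and> hd q \<in> C \<and> last q \<in> N \<and> last q \<notin> C" for q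
  have "good p" using p xC yC yU ay N_def good_def by auto
  then obtain q where gq: "good q" and qmin: "\<And>q'. good q' \<Longrightarrow> length q \<le> length q'"
    using ex_has_least_nat[of good p length] by blast
  have qw: "walk U E q" and qh: "hd q \<in> C" and ql: "last q \<in> N" "last q \<notin> C"
    using gq good_def by auto
  have qne: "q \<noteq> []" using qw by auto
  define n where "n = length q"
  have hd0: "hd q = q ! 0" using qne by (simp add: hd_conv_nth)
  have lastn: "last q = q ! (n - 1)" using qne n_def by (simp add: last_conv_nth)
  have short: "False" if ijs: "i + 1 < j" "j < n" "E (q ! i) (q ! j)" for i j
  proof -
    define q' where "q' = take (Suc i) q @ drop j q"
    have lt: "last (take (Suc i) q) = q ! i" using ijs n_def by (simp add: take_Suc_conv_app_nth)
    have "walk U E q'" unfolding q'_def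
      using walk_append[OF walk_take[OF qw, of "Suc i"] walk_drop[OF qw, of j]] ijs n_def lt
      by (simp add: hd_drop_conv_nth)
    moreover have "hd q' = hd q" using qne unfolding q'_def by (cases q) auto
    moreover have "last q' = last q" using ijs n_def unfolding q'_def by simp
    moreover have "length q' < n" using ijs n_def unfolding q'_def by simp
    ultimately show False using qmin[of q'] gq good_def n_def by auto
  qed
  have n3: "n \<ge> 3"
  proof -
    have "n \<noteq> 1" using qh ql n_def hd0 lastn by auto
    moreover have "n \<noteq> 2"
    proof
      assume n2: "n = 2"
      have "E (q ! 0) (q ! 1)" using walk_edge[OF qw, of 0] n2 n_def by simp
      then have "q ! 1 \<in> C" using Cclosed[of "q ! 0" "q ! 1"] qh ql hd0 lastn n2 by simp
      then show False using ql lastn n2 by simp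
    qed
    moreover have "n \<noteq> 0" using qne n_def by simp
    ultimately show ?thesis by linarith
  qed
  have anot: "\<forall>i. 0 < i \<and> i < length q - 1 \<longrightarrow> \<not> E a (q ! i)"
  proof (intro allI impI)
    fix i assume i: "0 < i \<and> i < length q - 1"
    show "\<not> E a (q ! i)"
    proof
      assume e: "E a (q ! i)"
      have qiN: "q ! i \<in> N" using e walk_nth_set[OF qw, of i] i N_def by auto
      show False
      proof (cases "q ! i \<in> C")
        case True
        have il: "i < length q" using i by linarith
        have "good (drop i q)" using True ql il walk_drop[OF qw, of i]
          by (simp add: good_def hd_drop_conv_nth)
        then have "length q \<le> length q - i" using qmin[of "drop i q"] by simp
        then show False using i by linarith
      next
        case False
        have "good (take (Suc i) q)" using False qiN i walk_take[OF qw, of "Suc i"] qh qne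
          by (auto simp: good_def take_Suc_conv_app_nth)
        then have "length q \<le> Suc i" using qmin[of "take (Suc i) q"] by simp
        then show False using i by linarith
      qed
    qed
  qed
  have chl: "\<forall>i j. i + 1 < j \<and> j < length q \<longrightarrow> \<not> E (q ! i) (q ! j)"
    using short n_def by auto
  have dq: "distinct q"
  proof (rule ccontr)
    assume "\<not> distinct q"
    then obtain i j where ij: "i < j" "j < n" "q ! i = q ! j"
      using n_def by (metis distinct_conv_nth linorder_neqE_nat)
    show False
    proof (cases "j = n - 1")
      case True
      have lt: "last (take (Suc i) q) = q ! i" using ij n_def by (simp add: take_Suc_conv_app_nth)
      have "good (take (Suc i) q)" using ij True qw qh ql qne lastn lt
        by (auto simp: good_def walk_take)
      then have "length q \<le> Suc i" using qmin[of "take (Suc i) q"] by simp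
      then show False using ij n_def by linarith
    next
      case False
      have "E (q ! i) (q ! Suc j)" using walk_edge[OF qw, of j] ij False n_def by simp
      moreover have "Suc j < n" using ij False by linarith
      ultimately show False using short[of i "Suc j"] ij by simp
    qed
  qed
  have aq: "a \<notin> set q" using qw aU by (auto simp: walk_def)
  have "E a (hd q)" "E a (last q)" using qh CN ql N_def by auto
  moreover have "walk V E q" using walk_mono[OF UV qw] .
  ultimately show False
    using apex_cycle[OF aV _ dq aq _ _ _ anot chl] n3 n_def by simp
qed


lemma walk_restrict: "walk V' E p \<Longrightarrow> set p \<subseteq> U \<Longrightarrow> walk U E p"
  by (simp add: walk_def)

lemma walk_V: "walk V E p \<Longrightarrow> v \<in> set p \<Longrightarrow> v \<in> V"
  by (auto simp: walk_def)

lemma set_tl_sub: "set (tl xs) \<subseteq> set xs" by (cases xs) auto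

definition up :: "'a \<Rightarrow> nat \<Rightarrow> 'a \<Rightarrow> 'a \<Rightarrow> bool" where
  "up u h \<alpha> y \<longleftrightarrow> (\<exists>q. walk V E q \<and> hd q = \<alpha> \<and> last q = y \<and> (\<forall>v\<in>set (tl q). h < d u v))"

lemma up_geodesic:
  assumes uV: "u \<in> V" and aV: "a \<in> V" and vV: "v \<in> V" and la: "d u a = h" and av: "d a v = d u v - h"
    and hv: "h \<le> d u v"
  shows "up u h a v"
proof -
  obtain p where p: "walk V E p" "hd p = a" "last p = v" "length p = Suc (d a v)"
    using dist_walk aV vV by blast
  have "h < d u w" if w: "w \<in> set (tl p)" for w
  proof -
    obtain i where i: "i < length (tl p)" "tl p ! i = w" using w by (meson in_set_conv_nth)
    have ne: "p \<noteq> []" using p by auto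
    have w': "w = p ! Suc i" using i ne by (cases p) auto
    have si: "Suc i < length p" using i ne by (cases p) auto
    have "d (p ! Suc i) v = d a v - Suc i" using geodesic_nth[OF p si] by simp
    moreover have "d u v \<le> d u (p ! Suc i) + d (p ! Suc i) v"
      using dist_triangle uV vV walk_nth_set[OF p(1) si] by blast
    ultimately show ?thesis unfolding w' using av hv si p(4) by linarith
  qed
  then show ?thesis unfolding up_def using p by blast
qed

lemma KL:
  assumes uV: "u \<in> V" and aV: "a \<in> V" and bV: "b \<in> V" and yV: "y \<in> V"
    and la: "d u a = j" and lb: "d u b = j" and ly: "j < d u y"
    and upa: "up u j a y" and upb: "up u j b y"
  shows "a = b \<or> E a b"
proof (rule ccontr)
  assume c: "\<not> (a = b \<or> E a b)"
  have j1: "j \<ge> 1"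
  proof (rule ccontr)
    assume "\<not> j \<ge> 1"
    then have "u = a" "u = b" using dist_0 uV aV bV la lb by auto
    then show False using c by simp
  qed
  obtain qa where qa: "walk V E qa" "hd qa = a" "last qa = y" "\<forall>v\<in>set (tl qa). j < d u v"
    using upa up_def by blast
  obtain qb where qb: "walk V E qb" "hd qb = b" "last qb = y" "\<forall>v\<in>set (tl qb). j < d u v"
    using upb up_def by blast
  have "tl qa \<noteq> []"
  proof
    assume "tl qa = []"
    then have "qa = [a]" using qa(1,2) by (cases qa) auto
    then show False using qa(3) la ly by simp
  qed
  then obtain x' rest where qa': "qa = a # x' # rest" using qa(1,2) by (cases qa; cases "tl qa") auto
  have ax': "E a x'" using qa(1) qa' by (simp add: walk_Cons2)
  have lx': "j < d u x'" using qa(4) qa' by simp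
  have w1: "walk V E (tl qa @ tl (rev qb))"
    using walk_append2[OF walk_drop[OF qa(1), of 1] walk_rev[OF E_sym' qb(1)]] qa qb qa'
    by (simp add: hd_rev)
  have s1: "\<forall>v\<in>set (tl qa @ tl (rev qb)). v = b \<or> j < d u v"
  proof
    fix v assume v: "v \<in> set (tl qa @ tl (rev qb))"
    show "v = b \<or> j < d u v"
    proof (cases "v \<in> set (tl qa)")
      case True then show ?thesis using qa(4) by blast
    next
      case False
      then have "v \<in> set (tl (rev qb))" using v by simp
      then have "v \<in> set qb" using set_tl_sub[of "rev qb"] by auto
      then have "v = hd qb \<or> v \<in> set (tl qb)" by (cases qb) auto
      then show ?thesis using qb by blast
    qed
  qed
  have l1: "last (tl qa @ tl (rev qb)) = b"
  proof -
    have "qb \<noteq> [b]" using qb(3) la lb ly by auto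
    then obtain z zs where qbz: "qb = b # z # zs" using qb(1,2) by (cases qb; cases "tl qb") auto
    have ln: "length (tl (rev qb)) \<ge> 1" using qbz by simp
    then have ne: "tl (rev qb) \<noteq> []" by (metis list.size(3) not_one_le_zero)
    have "last (tl (rev qb)) = last (rev qb)" using ne by (simp add: last_tl)
    also have "\<dots> = b" using qbz by simp
    finally show ?thesis using ne by simp
  qed
  have h1: "hd (tl qa @ tl (rev qb)) = x'" using qa' by simp
  obtain pb where pb: "walk V E pb" "hd pb = b" "last pb = u" "length pb = Suc (d b u)"
    using dist_walk bV uV by blast
  have s2: "\<forall>v\<in>set (tl pb). d u v < j"
  proof
    fix v assume v: "v \<in> set (tl pb)"
    obtain i where i: "i < length (tl pb)" "tl pb ! i = v" using v by (meson in_set_conv_nth)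
    have ne: "pb \<noteq> []" using pb by auto
    have v': "v = pb ! Suc i" and si: "Suc i < length pb" using i ne by (cases pb; auto)+
    have "d (pb ! Suc i) u = d b u - Suc i" using geodesic_nth[OF pb si] by simp
    moreover have "d u v = d v u" using dist_sym uV walk_nth_set[OF pb(1) si] v' by simp
    moreover have "d b u = j" using dist_sym uV bV lb by simp
    ultimately show "d u v < j" using v' j1 by simp
  qed
  obtain y' where y': "y' \<in> V" "d u y' = j - 1" "d y' a = 1"
    using ancestor[OF uV aV, of "j - 1"] la j1 by auto
  have ay': "E a y'" using dist_1[OF y'(1) aV y'(3)] E_sym by blast
  obtain py where py: "walk V E py" "hd py = u" "last py = y'" "length py = Suc (d u y')"
    using dist_walk uV y'(1) by blast
  have s3: "\<forall>v\<in>set py. d u v < j"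
  proof
    fix v assume v: "v \<in> set py"
    obtain i where i: "i < length py" "py ! i = v" using v by (meson in_set_conv_nth)
    have "d u v = i" using geodesic_nth[OF py i(1)] i by simp
    then show "d u v < j" using i py(4) y'(2) j1 by simp
  qed
  define W where "W = (tl qa @ tl (rev qb)) @ tl (pb @ tl py)"
  have wpb: "walk V E (pb @ tl py)" using walk_append2[OF pb(1) py(1)] pb py by simp
  have wW: "walk V E W" unfolding W_def
    using walk_append2[OF w1 wpb] l1 pb by (cases pb) auto
  have hW: "hd W = x'" unfolding W_def using h1 qa' by simp
  have lW: "last W = y'"
  proof -
    have ly: "last (pb @ tl py) = y'" using py pb by (cases py) auto
    have "d b u = j" using dist_sym uV bV lb by simp
    then have "length pb \<ge> 2" using pb(4) j1 by simp
    then have ne: "tl (pb @ tl py) \<noteq> []" by (cases pb) auto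
    then have "last W = last (tl (pb @ tl py))" unfolding W_def by simp
    also have "\<dots> = y'" using ne ly by (simp add: last_tl)
    finally show ?thesis .
  qed
  define U where "U = {v \<in> V. d u v \<noteq> j} \<union> {b}"
  have UV: "U \<subseteq> V" using U_def bV by auto
  have aU: "a \<notin> U" using U_def c la by auto
  have setW: "set W \<subseteq> U"
  proof
    fix v assume v: "v \<in> set W"
    have vV: "v \<in> V" using walk_V[OF wW v] .
    have "v = b \<or> j < d u v \<or> d u v < j"
    proof -
      have "v \<in> set (tl qa @ tl (rev qb)) \<or> v \<in> set (tl (pb @ tl py))" using v W_def by auto
      moreover have "set (tl (pb @ tl py)) \<subseteq> set (tl pb) \<union> set py"
        using pb set_tl_sub[of py] by (cases pb) auto
      ultimately show ?thesis using s1 s2 s3 by blast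
    qed
    then show "v \<in> U" using U_def vV by auto
  qed
  have x'U: "x' \<in> U" using U_def lx' E_V[OF ax'] by auto
  have y'U: "y' \<in> U" using U_def y' j1 by auto
  obtain r where r: "walk (U \<inter> {v. E a v}) E r" "hd r = x'" "last r = y'"
    using nbr_connected[OF aV UV aU x'U y'U ax' ay' walk_restrict[OF wW setW] hW lW] by blast
  obtain i where i: "Suc i < length r" "r ! i \<in> {v. j < d u v}" "r ! Suc i \<notin> {v. j < d u v}"
  proof -
    have "hd r \<in> {v. j < d u v}" "last r \<notin> {v. j < d u v}" using r lx' y'(2) j1 by auto
    then show ?thesis using walk_exit[OF r(1), of "{v. j < d u v}"] that by blast
  qed
  have ri: "r ! i \<in> U \<inter> {v. E a v}" "r ! Suc i \<in> U \<inter> {v. E a v}"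
    using walk_nth_set[OF r(1)] i(1) by auto
  have e: "E (r ! i) (r ! Suc i)" using walk_edge[OF r(1) i(1)] .
  have "E (r ! i) a" using ri E_sym by auto
  then have "d u (r ! i) \<le> d u a + 1" using dist_edge_diff[OF uV, of "r ! i" a] by auto
  then have l1': "d u (r ! i) = j + 1" using i la by simp
  have "d u a \<le> d u (r ! Suc i) + 1" using dist_edge_diff[OF uV, of a "r ! Suc i"] ri by auto
  moreover have "r ! Suc i \<noteq> b" using ri c by auto
  ultimately have l2': "d u (r ! Suc i) = j - 1" using ri i la U_def by auto
  have "d u (r ! i) \<le> d u (r ! Suc i) + 1" using dist_edge_diff[OF uV e] .
  then show False using l1' l2' j1 by simp
qed


lemma up_extend:
  assumes "up u h a y" "walk V E q" "hd q = y" "\<forall>v\<in>set q. h < d u v"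
  shows "up u h a (last q)"
proof -
  obtain p where p: "walk V E p" "hd p = a" "last p = y" "\<forall>v\<in>set (tl p). h < d u v"
    using assms(1) up_def by blast
  have w: "walk V E (p @ tl q)" using walk_append2[OF p(1) assms(2)] p assms by simp
  have "hd (p @ tl q) = a" using p by (cases p) auto
  moreover have "last (p @ tl q) = last q" using p assms(2,3) by (cases q) auto
  moreover have "\<forall>v\<in>set (tl (p @ tl q)). h < d u v"
  proof -
    have "set (tl (p @ tl q)) \<subseteq> set (tl p) \<union> set q"
      using p(1) set_tl_sub[of q] by (cases p) auto
    then show ?thesis using p(4) assms(4) by blast
  qed
  ultimately show ?thesis unfolding up_def using w by blast
qed

lemma anc_up:
  assumes uV: "u \<in> V" and xV: "x \<in> V" and tV: "t \<in> V" and hx: "h < d u x"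
    and c: "d x t + 2 * h \<le> d u t + d u x"
  shows "\<exists>\<alpha>\<in>V. d u \<alpha> = h \<and> d \<alpha> t + h = d u t \<and> up u h \<alpha> x"
proof -
  obtain P where P: "walk V E P" "hd P = x" "last P = t" "length P = Suc (d x t)"
    using dist_walk xV tV by blast
  show ?thesis
  proof (cases "\<exists>i<length P. d u (P ! i) \<le> h")
    case True
    then obtain i where i: "i < length P" "d u (P ! i) \<le> h" by blast
    define s where "s = P ! i"
    have sV: "s \<in> V" using walk_nth_set[OF P(1) i(1)] s_def by simp
    have xs: "d x s = i" and st: "d s t = d x t - i" using geodesic_nth[OF P i(1)] s_def by auto
    have "d u x \<le> d u s + d s x" using dist_triangle uV sV xV by blast
    moreover have "d s x = d x s" using dist_sym sV xV by simp
    moreover have "d u t \<le> d u s + d s t" using dist_triangle uV sV tV by blast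
    moreover have "d u s \<le> h" using i s_def by simp
    moreover have "i \<le> d x t" using i P(4) by simp
    ultimately have ls: "d u s = h" and e1: "d s t + h = d u t" and e2: "d s x = d u x - h"
      using xs st c by auto
    have "up u h s x" using up_geodesic[OF uV sV xV ls] e2 hx by simp
    then show ?thesis using sV ls e1 by blast
  next
    case False
    then have above: "\<forall>v\<in>set P. h < d u v" by (auto simp: in_set_conv_nth not_le)
    have ht: "h < d u t" using above P(1,3) by (auto simp: walk_def)
    obtain \<alpha> where \<alpha>: "\<alpha> \<in> V" "d u \<alpha> = h" "d \<alpha> t = d u t - h"
      using ancestor[OF uV tV, of h] ht by auto
    have "up u h \<alpha> t" using up_geodesic[OF uV \<alpha>(1) tV \<alpha>(2,3)] ht by simp
    then have "up u h \<alpha> (last (rev P))"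
      using up_extend[OF _ walk_rev[OF E_sym' P(1)]] above P by (simp add: hd_rev)
    then have "up u h \<alpha> x" using P by (simp add: last_rev)
    then show ?thesis using \<alpha> ht by auto
  qed
qed

lemma Lstar:
  assumes uV: "u \<in> V" and xV: "x \<in> V" and t1V: "t1 \<in> V" and t2V: "t2 \<in> V" and hx: "h < d u x"
    and c1: "d x t1 + 2 * h \<le> d u t1 + d u x" and c2: "d x t2 + 2 * h \<le> d u t2 + d u x"
  shows "d t1 t2 + 2 * h \<le> d u t1 + d u t2 + 1"
proof -
  obtain a1 where a1: "a1 \<in> V" "d u a1 = h" "d a1 t1 + h = d u t1" "up u h a1 x"
    using anc_up[OF uV xV t1V hx c1] by blast
  obtain a2 where a2: "a2 \<in> V" "d u a2 = h" "d a2 t2 + h = d u t2" "up u h a2 x"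
    using anc_up[OF uV xV t2V hx c2] by blast
  have "a1 = a2 \<or> E a1 a2" using KL[OF uV a1(1) a2(1) xV a1(2) a2(2) hx a1(4) a2(4)] .
  then have d12: "d a1 a2 \<le> 1" using dist_self[OF a1(1)] dist_edge by auto
  have "d t1 t2 \<le> d t1 a1 + d a1 t2" using dist_triangle t1V a1(1) t2V by blast
  moreover have "d a1 t2 \<le> d a1 a2 + d a2 t2" using dist_triangle a1(1) a2(1) t2V by blast
  moreover have "d t1 a1 = d a1 t1" using dist_sym t1V a1(1) by simp
  ultimately show ?thesis using d12 a1 a2 by linarith
qed


definition conn :: "'a set \<Rightarrow> 'a \<Rightarrow> 'a \<Rightarrow> bool" where
  "conn S x y \<longleftrightarrow> (\<exists>q. walk S E q \<and> hd q = x \<and> last q = y)"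

lemma conn_trans: "conn S x y \<Longrightarrow> conn S y z \<Longrightarrow> conn S x z"
  unfolding conn_def
proof (elim exE conjE)
  fix p q assume p: "walk S E p" "hd p = x" "last p = y" and q: "walk S E q" "hd q = y" "last q = z"
  have "walk S E (p @ tl q)" using walk_append2[OF p(1) q(1)] p q by simp
  moreover have "hd (p @ tl q) = x" using p by (cases p) auto
  moreover have "last (p @ tl q) = z" using p q by (cases q) auto
  ultimately show "\<exists>q. walk S E q \<and> hd q = x \<and> last q = z" by blast
qed

lemma conn_step: "x \<in> S \<Longrightarrow> y \<in> S \<Longrightarrow> x = y \<or> E x y \<Longrightarrow> conn S x y"
  unfolding conn_def
  by (metis last.simps list.sel(1) list.discI walk_Cons2 walk_single)

end


context chgraph
begin

lemma geo_level_lb: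
  assumes uV: "u \<in> V" and Z: "walk V E Z" "hd Z = z" "last Z = z'" "length Z = Suc (d z z')"
    and i: "i < length Z"
  shows "d u z + d u z' \<le> 2 * d u (Z ! i) + d z z'"
proof -
  have ne: "Z \<noteq> []" using Z by auto
  have zV: "z \<in> V" using Z(1,2) ne walk_V hd_in_set by blast
  have z'V: "z' \<in> V" using Z(1,3) ne walk_V last_in_set by blast
  have sV: "Z ! i \<in> V" using walk_nth_set[OF Z(1) i] .
  have a: "d z (Z ! i) = i" and b: "d (Z ! i) z' = d z z' - i" using geodesic_nth[OF Z i] by auto
  have "d u z \<le> d u (Z ! i) + d (Z ! i) z" using dist_triangle uV sV zV by blast
  moreover have "d (Z ! i) z = d z (Z ! i)" using dist_sym sV zV by simp
  moreover have "d u z' \<le> d u (Z ! i) + d (Z ! i) z'" using dist_triangle uV sV z'V by blast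
  moreover have "i \<le> d z z'" using i Z(4) by simp
  ultimately show ?thesis using a b by linarith
qed

lemma link:
  assumes uV: "u \<in> V" and zV: "z \<in> V" and z'V: "z' \<in> V" and lz: "d u z = k" and lz': "d u z' = k"
    and k3: "3 \<le> k" and zz': "d z z' + 3 \<le> 2 * k"
    and A_def: "A = {a \<in> V. d u a = 2 \<and> d a z = k - 2}"
    and A'_def: "A' = {a \<in> V. d u a = 2 \<and> d a z' = k - 2}"
    and pA: "p \<in> A" and p'A': "p' \<in> A'"
  shows "\<exists>a0\<in>A. \<exists>a0'\<in>A'. a0 = a0' \<or> E a0 a0'"
proof -
  obtain Z where Z: "walk V E Z" "hd Z = z" "last Z = z'" "length Z = Suc (d z z')"
    using dist_walk zV z'V by blast
  have ne: "Z \<noteq> []" using Z by auto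
  define L where "L = length Z"
  have lv: "2 \<le> d u (Z ! i)" if "i < L" for i
    using geo_level_lb[OF uV Z, of i] that L_def lz lz' zz' by linarith
  have upA: "up u 2 a z" if "a \<in> A" for a
    using up_geodesic[OF uV _ zV, of a 2] that A_def lz k3 by auto
  have upA': "up u 2 a z'" if "a \<in> A'" for a
    using up_geodesic[OF uV _ z'V, of a 2] that A'_def lz' k3 by auto
  have AV: "A \<subseteq> V" "A' \<subseteq> V" using A_def A'_def by auto
  show ?thesis
  proof (cases "\<forall>i<L. 2 < d u (Z ! i)")
    case True
    then have "\<forall>v\<in>set Z. 2 < d u v" using L_def by (auto simp: in_set_conv_nth)
    then have "up u 2 p z'" using up_extend[OF upA[OF pA] Z(1)] Z by simp
    then have "p = p' \<or> E p p'"
      using KL[OF uV _ _ z'V _ _ _ _ upA'[OF p'A']] pA p'A' AV A_def A'_def lz' k3 by auto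
    then show ?thesis using pA p'A' by blast
  next
    case False
    define S where "S = {i. i < L \<and> d u (Z ! i) \<le> 2}"
    have Sne: "S \<noteq> {}" using False S_def by auto
    have Sfin: "finite S" using S_def by auto
    define i0 where "i0 = Min S"
    define i1 where "i1 = Max S"
    have i0S: "i0 \<in> S" and i1S: "i1 \<in> S" using Sne Sfin i0_def i1_def by auto
    have i0min: "\<And>i. i \<in> S \<Longrightarrow> i0 \<le> i" using Sfin i0_def by auto
    have i1max: "\<And>i. i \<in> S \<Longrightarrow> i \<le> i1" using Sfin i1_def by auto
    have i01: "i0 \<le> i1" using i0S i1max by blast
    have i0L: "i0 < L" and i1L: "i1 < L" using i0S i1S S_def by auto
    define s0 where "s0 = Z ! i0"
    define s1 where "s1 = Z ! i1"
    have s0V: "s0 \<in> V" and s1V: "s1 \<in> V" using walk_nth_set[OF Z(1)] i0L i1L L_def s0_def s1_def by auto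
    have ls0: "d u s0 = 2" using lv[OF i0L] i0S S_def s0_def by auto
    have ls1: "d u s1 = 2" using lv[OF i1L] i1S S_def s1_def by auto
    have zs0: "d z s0 = i0" and s0z': "d s0 z' = d z z' - i0"
      using geodesic_nth[OF Z, of i0] i0L L_def s0_def by auto
    have zs1: "d z s1 = i1" and s1z': "d s1 z' = d z z' - i1"
      using geodesic_nth[OF Z, of i1] i1L L_def s1_def by auto
    have s0z: "d s0 z = i0" using zs0 dist_sym s0V zV by simp
    have "d u z \<le> d u s0 + d s0 z" using dist_triangle uV s0V zV by blast
    then have i0k: "k - 2 \<le> i0" using lz ls0 s0z by linarith
    have "d u z' \<le> d u s1 + d s1 z'" using dist_triangle uV s1V z'V by blast
    then have i1k: "k - 2 \<le> d z z' - i1" using lz' ls1 s1z' by linarith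
    have i1le: "i1 \<le> d z z'" using i1L L_def Z(4) by simp
    have up0: "up u 2 s0 z"
    proof -
      define q where "q = rev (take (Suc i0) Z)"
      have q': "q = s0 # rev (take i0 Z)" using q_def s0_def i0L L_def by (simp add: take_Suc_conv_app_nth)
      have "walk V E q" unfolding q_def using walk_rev[OF E_sym' walk_take[OF Z(1), of "Suc i0"]] by simp
      moreover have "hd q = s0" using q' by simp
      moreover have "last q = z" unfolding q_def using Z(2) ne by (simp add: last_rev hd_conv_nth)
      moreover have "\<forall>v\<in>set (tl q). 2 < d u v"
      proof
        fix v assume "v \<in> set (tl q)"
        then have "v \<in> set (take i0 Z)" using q' by simp
        then obtain j where j: "j < i0" "v = Z ! j" using i0L L_def by (auto simp: in_set_conv_nth)
        have "j \<notin> S" using i0min j(1) by fastforce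
        then show "2 < d u v" using j i0L S_def by auto
      qed
      ultimately show ?thesis unfolding up_def by blast
    qed
    have up1: "up u 2 s1 z'"
    proof -
      define q where "q = drop i1 Z"
      have q': "q = s1 # drop (Suc i1) Z" using q_def s1_def i1L L_def by (simp add: Cons_nth_drop_Suc)
      have "walk V E q" unfolding q_def using walk_drop[OF Z(1)] i1L L_def by simp
      moreover have "hd q = s1" using q' by simp
      moreover have "last q = z'" unfolding q_def using Z(3) i1L L_def by simp
      moreover have "\<forall>v\<in>set (tl q). 2 < d u v"
      proof
        fix v assume "v \<in> set (tl q)"
        then have "v \<in> set (drop (Suc i1) Z)" using q' by simp
        then obtain j where j: "j < L" "i1 < j" "v = Z ! j" using L_def
          by (auto simp: in_set_conv_nth) (metis add.commute add_Suc_right less_add_Suc1 less_diff_conv)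
        have "j \<notin> S" using i1max j(2) by fastforce
        then show "2 < d u v" using j S_def by auto
      qed
      ultimately show ?thesis unfolding up_def by blast
    qed
    have KA: "a = s0 \<or> E a s0" if "a \<in> A" for a
      using KL[OF uV _ s0V zV _ ls0 _ upA[OF that] up0] that A_def lz k3 by auto
    have KA': "a = s1 \<or> E a s1" if "a \<in> A'" for a
      using KL[OF uV _ s1V z'V _ ls1 _ upA'[OF that] up1] that A'_def lz' k3 by auto
    show ?thesis
    proof (cases "i0 = i1")
      case True
      then have s01: "s0 = s1" using s0_def s1_def by simp
      show ?thesis
      proof (cases "i0 = k - 2")
        case True
        then have "s0 \<in> A" using A_def s0V ls0 s0z by simp
        moreover have "p' = s0 \<or> E p' s0" using KA'[OF p'A'] s01 by simp
        ultimately show ?thesis using p'A' E_sym by blast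
      next
        case False
        then have "d s0 z' = k - 2" using s0z' i0k i1k True zz' by linarith
        then have "s0 \<in> A'" using A'_def s0V ls0 by simp
        moreover have "p = s0 \<or> E p s0" using KA[OF pA] by simp
        ultimately show ?thesis using pA by blast
      qed
    next
      case False
      then have i1s: "i1 = Suc i0" and e0: "i0 = k - 2" and e1: "d z z' - i1 = k - 2"
        using i01 i0k i1k zz' i1le by linarith+
      have "s0 \<in> A" using A_def s0V ls0 s0z e0 by simp
      moreover have "s1 \<in> A'" using A'_def s1V ls1 s1z' e1 by simp
      moreover have "E s0 s1" using walk_edge[OF Z(1), of i0] i1s i1L L_def s0_def s1_def by simp
      ultimately show ?thesis by blast
    qed
  qed
qed


lemma descent:
  assumes uV: "u \<in> V" and kdef: "ecc V E u = k" and Dk: "diameter V E + 3 \<le> 2 * k"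
  shows "\<exists>w\<in>V. E u w \<and> ecc V E w < k"
proof -
  define Dm where "Dm = diameter V E"
  have kD: "k \<le> Dm" using ecc_le_diam[OF uV] kdef Dm_def by simp
  have k3: "3 \<le> k" using kD Dk Dm_def by linarith
  have dD: "\<And>x y. x \<in> V \<Longrightarrow> y \<in> V \<Longrightarrow> d x y \<le> Dm" using dist_le_diam Dm_def by blast
  have lk: "\<And>v. v \<in> V \<Longrightarrow> d u v \<le> k" using ecc_ge uV kdef by blast
  define F where "F = {z \<in> V. d u z = k}"
  obtain z0 where z0: "z0 \<in> V" "d u z0 = k" using ecc_attained[OF uV] kdef by blast
  define W1 where "W1 = {w \<in> V. d u w = 1}"
  define cov where "cov w = {z \<in> F. d w z < k}" for w
  have covF: "cov w \<subseteq> F" for w using cov_def by auto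
  have finF: "finite F" using finV F_def by auto
  obtain w00 where w00: "w00 \<in> V" "d u w00 = 1" "d w00 z0 = k - 1"
    using ancestor[OF uV z0(1), of 1] z0 k3 by auto
  have "w00 \<in> W1" using w00 W1_def by simp
  then obtain w where wW: "w \<in> W1" and wmax: "\<And>w'. w' \<in> W1 \<Longrightarrow> card F - card (cov w) \<le> card F - card (cov w')"
    using ex_has_least_nat[of "\<lambda>w. w \<in> W1" w00 "\<lambda>w. card F - card (cov w)"] by blast
  have wV: "w \<in> V" and lw: "d u w = 1" using wW W1_def by auto
  have uw: "d w u = 1" using dist_sym uV wV lw by simp
  have Euw: "E u w" using dist_1[OF uV wV lw] .
  have Fcov: "F \<subseteq> cov w"
  proof
    fix z assume zF: "z \<in> F"
    show "z \<in> cov w"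
    proof (rule ccontr)
      assume zn: "z \<notin> cov w"
      have zV: "z \<in> V" and lz: "d u z = k" using zF F_def by auto
      have wz: "k \<le> d w z" using zn zF cov_def by auto
      obtain w' where w': "w' \<in> V" "d u w' = 1" "d w' z = k - 1"
        using ancestor[OF uV zV, of 1] lz k3 by auto
      have w'W: "w' \<in> W1" using w' W1_def by simp
      have zc': "z \<in> cov w'" using cov_def zF w' k3 by simp
      have "\<not> cov w \<subseteq> cov w'"
      proof
        assume sub: "cov w \<subseteq> cov w'"
        then have "cov w \<subset> cov w'" using zc' zn by blast
        then have "card (cov w) < card (cov w')"
          using psubset_card_mono finite_subset[OF covF finF] by blast
        moreover have "card (cov w') \<le> card F" using card_mono[OF finF covF] .
        ultimately show False using wmax[OF w'W] by linarith
      qed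
      then obtain z' where z'c: "z' \<in> cov w" and z'n: "z' \<notin> cov w'" by blast
      have z'V: "z' \<in> V" and lz': "d u z' = k" and wz': "d w z' < k"
        using z'c cov_def F_def by auto
      have w'z': "k \<le> d w' z'" using z'n z'c cov_def by auto
      have "d u z' \<le> d u w + d w z'" using dist_triangle uV wV z'V by blast
      then have wz'e: "d w z' = k - 1" using lz' lw wz' by linarith
      have ww': "w \<noteq> w'" using wz' w'z' by auto
      define A where "A = {a \<in> V. d u a = 2 \<and> d a z = k - 2}"
      define A' where "A' = {a \<in> V. d u a = 2 \<and> d a z' = k - 2}"
      have NA: "\<not> E w a" if "a \<in> A" for a
      proof
        assume e: "E w a"
        have "d w z \<le> d w a + d a z" using dist_triangle wV zV that A_def by blast
        then show False using dist_edge[OF e] that A_def wz k3 by auto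
      qed
      have NA': "\<not> E w' a" if "a \<in> A'" for a
      proof
        assume e: "E w' a"
        have "d w' z' \<le> d w' a + d a z'" using dist_triangle w'(1) z'V that A'_def by blast
        then show False using dist_edge[OF e] that A'_def w'z' k3 by auto
      qed
      have nb: "\<exists>p\<in>V. E x p \<and> d u p = 2 \<and> d p y = k - 2"
        if xy: "x \<in> V" "y \<in> V" "d u x = 1" "d u y = k" "d x y = k - 1" for x y
      proof -
        obtain P where P: "walk V E P" "hd P = x" "last P = y" "length P = Suc (d x y)"
          using dist_walk xy by blast
        have i1: "1 < length P" using P(4) xy k3 by simp
        define p where "p = P ! 1"
        have pV: "p \<in> V" using walk_nth_set[OF P(1) i1] p_def by simp
        have xp: "d x p = 1" and py: "d p y = k - 2" using geodesic_nth[OF P i1] p_def xy by auto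
        have "E x p" using dist_1[OF xy(1) pV xp] .
        moreover have "d u p \<le> d u x + d x p" using dist_triangle uV xy(1) pV by blast
        moreover have "d u y \<le> d u p + d p y" using dist_triangle uV pV xy(2) by blast
        ultimately show ?thesis using pV py xy xp k3 by (intro bexI[of _ p]) auto
      qed
      obtain p' where p': "p' \<in> V" "E w p'" "d u p' = 2" "d p' z' = k - 2"
        using nb[OF wV z'V lw lz' wz'e] by blast
      obtain p where p: "p \<in> V" "E w' p" "d u p = 2" "d p z = k - 2"
        using nb[OF w'(1) zV w'(2) lz w'(3)] by blast
      have pA: "p \<in> A" and p'A': "p' \<in> A'" using p p' A_def A'_def by auto
      obtain Z where Z: "walk V E Z" "hd Z = z" "last Z = z'" "length Z = Suc (d z z')"
        using dist_walk zV z'V by blast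
      have zz': "d z z' + 3 \<le> 2 * k" using dD[OF zV z'V] Dk Dm_def by linarith
      have Zab: "\<forall>v\<in>set Z. 1 < d u v"
      proof
        fix v assume "v \<in> set Z"
        then obtain i where i: "i < length Z" "v = Z ! i" by (auto simp: in_set_conv_nth)
        show "1 < d u v" unfolding i(2) using geo_level_lb[OF uV Z i(1)] lz lz' zz' by linarith
      qed
      have upw: "up u 1 w z'" using up_geodesic[OF uV wV z'V lw] wz'e lz' k3 by simp
      have upw'z: "up u 1 w' z" using up_geodesic[OF uV w'(1) zV w'(2)] w'(3) lz k3 by simp
      have upw': "up u 1 w' z'" using up_extend[OF upw'z Z(1)] Z Zab by simp
      have Eww': "E w w'" using KL[OF uV wV w'(1) z'V lw w'(2) _ upw upw'] lz' k3 ww' by auto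
      have upAz: "up u 2 a z" if "a \<in> A" for a
        using up_geodesic[OF uV _ zV, of a 2] that A_def lz k3 by auto
      have upAz': "up u 2 a z'" if "a \<in> A'" for a
        using up_geodesic[OF uV _ z'V, of a 2] that A'_def lz' k3 by auto
      have cA: "a1 = a2 \<or> E a1 a2" if aa: "a1 \<in> A" "a2 \<in> A" for a1 a2
        using KL[OF uV _ _ zV _ _ _ upAz[OF aa(1)] upAz[OF aa(2)]] aa A_def lz k3 by auto
      have cA': "a1 = a2 \<or> E a1 a2" if aa: "a1 \<in> A'" "a2 \<in> A'" for a1 a2
        using KL[OF uV _ _ z'V _ _ _ upAz'[OF aa(1)] upAz'[OF aa(2)]] aa A'_def lz' k3 by auto
      obtain a0 a0' where a0: "a0 \<in> A" "a0' \<in> A'" "a0 = a0' \<or> E a0 a0'"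
        using link[OF uV zV z'V lz lz' k3 zz' A_def A'_def pA p'A'] by blast
      define U where "U = A \<union> A' \<union> {w'}"
      have UV: "U \<subseteq> V" using U_def A_def A'_def w' by auto
      have wU: "w \<notin> U" using U_def A_def A'_def lw ww' by auto
      have cU: "conn U w' p'"
      proof -
        have "conn U w' p" using conn_step[of w' U p] U_def pA p by auto
        moreover have "conn U p a0" using conn_step[of p U a0] U_def pA a0 cA by auto
        moreover have "conn U a0 a0'" using conn_step[of a0 U a0'] U_def a0 by auto
        moreover have "conn U a0' p'" using conn_step[of a0' U p'] U_def p'A' a0 cA' by auto
        ultimately show ?thesis using conn_trans by blast
      qed
      then obtain q where q: "walk U E q" "hd q = w'" "last q = p'" using conn_def by blast
      obtain r where r: "walk (U \<inter> {v. E w v}) E r" "hd r = w'" "last r = p'"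
        using nbr_connected[OF wV UV wU _ _ Eww' p'(2) q] U_def p'A' by auto
      have "p' \<noteq> w'" using p' w' by auto
      then obtain i where i: "Suc i < length r" "r ! i \<in> {w'}" "r ! Suc i \<notin> {w'}"
        using walk_exit[OF r(1), of "{w'}"] r by auto
      have ri: "r ! Suc i \<in> U \<inter> {v. E w v}" using walk_nth_set[OF r(1) i(1)] .
      have e: "E w' (r ! Suc i)" using walk_edge[OF r(1) i(1)] i(2) by simp
      have "r ! Suc i \<in> A \<or> r ! Suc i \<in> A'" using ri i(3) U_def by auto
      then show False using NA NA' ri e by auto
    qed
  qed
  have "ecc V E w \<le> k - 1"
  proof (rule ecc_le[OF wV])
    fix v assume vV: "v \<in> V"
    have lv: "d u v \<le> k" using lk[OF vV] .
    consider "d u v \<le> k - 2" | "d u v = k - 1" | "d u v = k" using lv by linarith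
    then show "d w v \<le> k - 1"
    proof cases
      case 1
      have "d w v \<le> d w u + d u v" using dist_triangle wV uV vV by blast
      then show ?thesis using 1 uw k3 by linarith
    next
      case 2
      have z0F: "z0 \<in> F" using z0 F_def by simp
      then have z0w: "d w z0 < k" using Fcov cov_def by auto
      have c1: "d z0 v + 2 * 1 \<le> d u v + d u z0" using dD[OF z0(1) vV] Dk Dm_def 2 z0 by linarith
      have c2: "d z0 w + 2 * 1 \<le> d u w + d u z0" using dist_sym[OF z0(1) wV] z0w lw z0 by linarith
      have "d v w + 2 * 1 \<le> d u v + d u w + 1" using Lstar[OF uV z0(1) vV wV _ c1 c2] z0 k3 by simp
      then show ?thesis using dist_sym[OF vV wV] 2 lw k3 by linarith
    next
      case 3
      then have "v \<in> F" using vV F_def by simp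
      then show ?thesis using Fcov cov_def by auto
    qed
  qed
  then show ?thesis using wV Euw k3 by (intro bexI[of _ w]) auto
qed


lemma LS: "2 * radius V E \<le> diameter V E + 2"
proof (rule ccontr)
  assume "\<not> ?thesis"
  then have Dk: "diameter V E + 3 \<le> 2 * radius V E" by linarith
  obtain c where c: "c \<in> V" "ecc V E c = radius V E" using central by blast
  obtain w where w: "w \<in> V" "ecc V E w < radius V E" using descent[OF c Dk] by blast
  then show False using radius_le[OF w(1)] by simp
qed

lemma main: "\<forall>u\<in>V. \<exists>t\<in>diametral V E. radius V E \<le> d u t"
proof
  fix u assume uV: "u \<in> V"
  define r where "r = radius V E"
  define Dm where "Dm = diameter V E"
  show "\<exists>t\<in>diametral V E. radius V E \<le> d u t"
  proof (rule ccontr)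
    assume "\<not> ?thesis"
    then have small: "\<And>t. t \<in> diametral V E \<Longrightarrow> d u t < r" using r_def by auto
    obtain t1 where t1: "t1 \<in> V" "ecc V E t1 = Dm" using diametral_ex Dm_def by blast
    obtain t2 where t2: "t2 \<in> V" "d t1 t2 = Dm" using ecc_attained[OF t1(1)] t1 by auto
    have "d t2 t1 \<le> ecc V E t2" using ecc_ge t1(1) t2(1) by blast
    moreover have "ecc V E t2 \<le> Dm" using ecc_le_diam[OF t2(1)] Dm_def by simp
    moreover have "d t2 t1 = Dm" using dist_sym t1(1) t2(1) t2(2) by simp
    ultimately have t2e: "ecc V E t2 = Dm" by simp
    have t1D: "t1 \<in> diametral V E" and t2D: "t2 \<in> diametral V E"
      using t1 t2(1) t2e Dm_def by (auto simp: diametral_def)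
    have a1: "d u t1 < r" and a2: "d u t2 < r" using small t1D t2D by auto
    have "d t1 t2 \<le> d t1 u + d u t2" using dist_triangle t1(1) uV t2(1) by blast
    moreover have "d t1 u = d u t1" using dist_sym t1(1) uV by simp
    moreover have "2 * r \<le> Dm + 2" using LS r_def Dm_def by simp
    ultimately have e1: "d u t1 + 1 = r" and e2: "d u t2 + 1 = r" and De: "Dm + 2 = 2 * r"
      using a1 a2 t2(2) by linarith+
    obtain x where x: "x \<in> V" "d u x = ecc V E u" using ecc_attained[OF uV] by blast
    have rx: "r \<le> d u x" using radius_le[OF uV] x r_def by simp
    have "ecc V E u \<le> Dm" using ecc_le_diam[OF uV] Dm_def by simp
    then have r2: "2 \<le> r" using rx x De by linarith
    have "x \<notin> diametral V E" using small[of x] rx by auto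
    then have "ecc V E x \<noteq> Dm" using x(1) Dm_def by (auto simp: diametral_def)
    then have ex: "ecc V E x < Dm" using ecc_le_diam[OF x(1)] Dm_def by simp
    have c1: "d x t1 + 2 * 1 \<le> d u t1 + d u x" using ecc_ge[OF x(1) t1(1)] ex e1 De rx by linarith
    have c2: "d x t2 + 2 * 1 \<le> d u t2 + d u x" using ecc_ge[OF x(1) t2(1)] ex e2 De rx by linarith
    have "d t1 t2 + 2 * 1 \<le> d u t1 + d u t2 + 1"
      using Lstar[OF uV x(1) t1(1) t2(1) _ c1 c2] rx r2 by linarith
    then show False using t2(2) e1 e2 De by linarith
  qed
qed

end

theorem proposition11:
  fixes V :: "'a set" and E :: "'a \<Rightarrow> 'a \<Rightarrow> bool"
  assumes "simple_graph V E" and "connected_graph V E" and "chordal V E"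
  shows "\<forall>u\<in>V. \<exists>t\<in>diametral V E. dist V E u t \<ge> radius V E"
proof -
  interpret chgraph V E using assms by unfold_locales
  show ?thesis using main by simp
qed

end
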